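(* Let $\lambda_1,\lambda_2,\lambda_3\in\mathbb{R}$ with $0<\lambda_2<(2+2\sqrt2)\lambda_1$ and $\lambda_3>0$. Then $(z_1,z_2)=(0,0)$ is the only real solution of the system $$\lambda_1z_1+\lambda_3(z_1-z_2)+\lambda_2\frac{z_1^2(z_1-1)}{1+z_1^2}=0,\qquad \lambda_1z_2+\lambda_3(z_2-z_1)+\lambda_2\frac{z_2^2(z_2-1)}{1+z_2^2}=0.$$ *)

theory Defs
  imports Complex_Main
begin

end

theory Submission
  imports Defs
begin

lemma quadpos:
  fixes l1 l2 z :: real
  assumes "0 < l2" and "l2 < (2 + 2 * sqrt 2) * l1"
  shows "(l1+l2)*z^2 - l2*z + l1 > 0"
proof -
  have s2: "sqrt 2 * sqrt 2 = 2" by simp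
  have s1: "sqrt 2 > 1" by simp
  have l1: "l1 > 0"
  proof (rule ccontr)
    assume "\<not> l1 > 0"
    hence "(2 + 2 * sqrt 2) * l1 \<le> 0" using s1 by (simp add: mult_nonneg_nonpos)
    thus False using assms by simp
  qed
  have a: "l2 - 2*l1 < 2*sqrt 2*l1" using assms(2) by (simp add: algebra_simps)
  have "l1 < sqrt 2 * l1" using s1 l1 by simp
  hence b: "-(2*sqrt 2*l1) < l2 - 2*l1" using assms(1) by linarith
  have "(2*sqrt 2*l1 - (l2 - 2*l1)) * (2*sqrt 2*l1 + (l2 - 2*l1)) > 0"
    using a b by (intro mult_pos_pos) linarith+
  hence "4*(sqrt 2 * sqrt 2)*l1*l1 - (l2 - 2*l1)*(l2-2*l1) > 0" by (simp add: algebra_simps)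
  hence D: "4*l1*(l1+l2) - l2^2 > 0" by (simp add: power2_eq_square algebra_simps s2)
  have "4*(l1+l2)*((l1+l2)*z^2 - l2*z + l1) = (2*(l1+l2)*z - l2)^2 + (4*l1*(l1+l2) - l2^2)"
    by (simp add: power2_eq_square algebra_simps)
  also have "... > 0" using D by (smt (verit) zero_le_power2)
  finally have "4*(l1+l2)*((l1+l2)*z^2 - l2*z + l1) > 0" .
  moreover have "4*(l1+l2) > 0" using l1 assms(1) by simp
  ultimately show ?thesis by (simp add: zero_less_mult_iff)
qed

lemma keyid:
  fixes l1 l2 z :: real
  shows "z*(l1 * z + l2 * (z^2 * (z - 1) / (1 + z^2))) = z^2 * ((l1+l2)*z^2 - l2*z + l1) / (1+z^2)"
proof -
  have "1 + z^2 \<noteq> 0" by (smt (verit) zero_le_power2)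
  hence "l1 * z + l2 * (z^2 * (z - 1) / (1 + z^2)) = (l1*z*(1+z^2) + l2*(z^2*(z-1)))/(1+z^2)"
    by (simp add: field_simps)
  also have "... = z*((l1+l2)*z^2 - l2*z + l1)/(1+z^2)" by (simp add: algebra_simps power2_eq_square)
  finally show ?thesis by (simp add: power2_eq_square)
qed

lemma keynn:
  fixes l1 l2 z :: real
  assumes "0 < l2" and "l2 < (2 + 2 * sqrt 2) * l1"
  shows "z*(l1 * z + l2 * (z^2 * (z - 1) / (1 + z^2))) \<ge> 0"
    and "z*(l1 * z + l2 * (z^2 * (z - 1) / (1 + z^2))) = 0 \<Longrightarrow> z = 0"
proof -
  have q: "(l1+l2)*z^2 - l2*z + l1 > 0" using quadpos assms by blast
  have p: "1 + z^2 > 0" by (smt (verit) zero_le_power2)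
  show "z*(l1 * z + l2 * (z^2 * (z - 1) / (1 + z^2))) \<ge> 0"
    unfolding keyid using q p by simp
  show "z*(l1 * z + l2 * (z^2 * (z - 1) / (1 + z^2))) = 0 \<Longrightarrow> z = 0"
    unfolding keyid using q p by simp
qed

theorem lemmaF3:
  fixes l1 l2 l3 z1 z2 :: real
  assumes "0 < l2" and "l2 < (2 + 2 * sqrt 2) * l1" and "l3 > 0"
  shows "(l1 * z1 + l3 * (z1 - z2) + l2 * (z1^2 * (z1 - 1) / (1 + z1^2)) = 0 \<and>
          l1 * z2 + l3 * (z2 - z1) + l2 * (z2^2 * (z2 - 1) / (1 + z2^2)) = 0)
         \<longleftrightarrow> (z1 = 0 \<and> z2 = 0)"
proof
  assume h: "l1 * z1 + l3 * (z1 - z2) + l2 * (z1^2 * (z1 - 1) / (1 + z1^2)) = 0 \<and>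
          l1 * z2 + l3 * (z2 - z1) + l2 * (z2^2 * (z2 - 1) / (1 + z2^2)) = 0"
  define A where "A = z1*(l1 * z1 + l2 * (z1^2 * (z1 - 1) / (1 + z1^2)))"
  define B where "B = z2*(l1 * z2 + l2 * (z2^2 * (z2 - 1) / (1 + z2^2)))"
  have A0: "A \<ge> 0" unfolding A_def using keynn(1) assms(1,2) by blast
  have B0: "B \<ge> 0" unfolding B_def using keynn(1) assms(1,2) by blast
  have "A + B + l3*(z1-z2)^2 = z1*(l1 * z1 + l3 * (z1 - z2) + l2 * (z1^2 * (z1 - 1) / (1 + z1^2)))
     + z2*(l1 * z2 + l3 * (z2 - z1) + l2 * (z2^2 * (z2 - 1) / (1 + z2^2)))"
    unfolding A_def B_def by (simp add: algebra_simps power2_eq_square)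
  also have "... = 0" using h by simp
  finally have S: "A + B + l3*(z1-z2)^2 = 0" .
  have C0: "l3*(z1-z2)^2 \<ge> 0" using assms(3) by simp
  have "A = 0" using S A0 B0 C0 by linarith
  hence "z1 = 0" unfolding A_def using keynn(2) assms(1,2) by blast
  moreover have "B = 0" using S A0 B0 C0 by linarith
  hence "z2 = 0" unfolding B_def using keynn(2) assms(1,2) by blast
  ultimately show "z1 = 0 \<and> z2 = 0" by simp
next
  assume "z1 = 0 \<and> z2 = 0"
  thus "l1 * z1 + l3 * (z1 - z2) + l2 * (z1^2 * (z1 - 1) / (1 + z1^2)) = 0 \<and>
          l1 * z2 + l3 * (z2 - z1) + l2 * (z2^2 * (z2 - 1) / (1 + z2^2)) = 0" by simp
qed

end
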